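(* Let $[\mu]\in\mathbb PV_n$ be a critical point of $F_n$ of type $\alpha=(k_1<k_2<\dots<k_r;d_1,\dots,d_r)$. Then (i) if $\alpha=(0;n)$, then $F_n([\mu])=\frac4n$; (ii) if $\alpha\neq(0;n)$, then $F_n([\mu])=4\left(n-\dfrac{(k_1d_1+\dots+k_rd_r)^2}{k_1^2d_1+\dots+k_r^2d_r}\right)^{-1}$.
   Context: $V_n$ is the space of bilinear maps $\mu:\mathbb C^n\times\mathbb C^n\to\mathbb C^n$ with standard Hermitian structures. $L^\mu_XY=\mu(X,Y)$, $R^\mu_XY=\mu(Y,X)$, $\mathrm M_\mu=2\sum_i L^\mu_{X_i}(L^\mu_{X_i})^*-2\sum_i (L^\mu_{X_i})^*L^\mu_{X_i}-2\sum_i (R^\mu_{X_i})^*R^\mu_{X_i}$ ($\{X_i\}$ orthonormal), $F_n([\mu])=\operatorname{tr}\mathrm M_\mu^2/\|\mu\|^4$. $[\mu]$ is a critical point of $F_n$ iff $\mathrm M_\mu=c_\mu I+D_\mu$ with $c_\mu\in\mathbb R$ and $D_\mu$ a derivation of $\mu$. For such a critical point there is $c>0$ such that the eigenvalues of $cD_\mu$ are integers with no common divisor $>1$; if $k_1<\dots<k_r$ are the distinct eigenvalues of $cD_\mu$ with multiplicities $d_1,\dots,d_r$, the data $(k_1<\dots<k_r;d_1,\dots,d_r)$ is called the type of $[\mu]$. Type $(0;n)$ means $D_\mu=0$. *)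

theory Defs
  imports "Jordan_Normal_Form.Char_Poly"
begin

text \<open>An element of V_n is represented by its structure constants w.r.t. the standard
 orthonormal basis e_0,...,e_(n-1) of C^n:
 mu(e_i, e_j) = sum_k (mu i j k) e_k   (only indices < n are relevant).\<close>

type_synonym bilin = "nat \<Rightarrow> nat \<Rightarrow> nat \<Rightarrow> complex"

definition bapp :: "nat \<Rightarrow> bilin \<Rightarrow> complex vec \<Rightarrow> complex vec \<Rightarrow> complex vec" where
  "bapp n \<mu> x y = vec n (\<lambda>k. \<Sum>i<n. \<Sum>j<n. x $ i * y $ j * \<mu> i j k)"

definition adj :: "complex mat \<Rightarrow> complex mat" where
  "adj A = mat (dim_col A) (dim_row A) (\<lambda>(i,j). cnj (A $$ (j,i)))"

definition tr :: "complex mat \<Rightarrow> complex" where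
  "tr A = (\<Sum>i<dim_row A. A $$ (i,i))"

text \<open>Matrices of L_{e_i} and R_{e_i}: column j is mu(e_i,e_j), resp. mu(e_j,e_i).\<close>
definition Lmat :: "nat \<Rightarrow> bilin \<Rightarrow> nat \<Rightarrow> complex mat" where
  "Lmat n \<mu> i = mat n n (\<lambda>(k,j). \<mu> i j k)"

definition Rmat :: "nat \<Rightarrow> bilin \<Rightarrow> nat \<Rightarrow> complex mat" where
  "Rmat n \<mu> i = mat n n (\<lambda>(k,j). \<mu> j i k)"

definition msum :: "nat \<Rightarrow> (nat \<Rightarrow> complex mat) \<Rightarrow> complex mat" where
  "msum n f = mat n n (\<lambda>(a,b). \<Sum>i<n. f i $$ (a,b))"

definition Mmu :: "nat \<Rightarrow> bilin \<Rightarrow> complex mat" where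
  "Mmu n \<mu> =
     2 \<cdot>\<^sub>m msum n (\<lambda>i. Lmat n \<mu> i * adj (Lmat n \<mu> i))
   - 2 \<cdot>\<^sub>m msum n (\<lambda>i. adj (Lmat n \<mu> i) * Lmat n \<mu> i)
   - 2 \<cdot>\<^sub>m msum n (\<lambda>i. adj (Rmat n \<mu> i) * Rmat n \<mu> i)"

definition normsq :: "nat \<Rightarrow> bilin \<Rightarrow> real" where
  "normsq n \<mu> = (\<Sum>i<n. \<Sum>j<n. \<Sum>k<n. (cmod (\<mu> i j k))\<^sup>2)"

text \<open>F_n([mu]) = tr(M_mu^2)/||mu||^4 (tr M_mu^2 is real since M_mu is Hermitian).\<close>
definition Fn :: "nat \<Rightarrow> bilin \<Rightarrow> real" where
  "Fn n \<mu> = Re (tr (Mmu n \<mu> * Mmu n \<mu>)) / (normsq n \<mu>)\<^sup>2"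

definition is_derivation :: "nat \<Rightarrow> bilin \<Rightarrow> complex mat \<Rightarrow> bool" where
  "is_derivation n \<mu> D \<longleftrightarrow> D \<in> carrier_mat n n \<and>
     (\<forall>x\<in>carrier_vec n. \<forall>y\<in>carrier_vec n.
        D *\<^sub>v bapp n \<mu> x y = bapp n \<mu> (D *\<^sub>v x) y + bapp n \<mu> x (D *\<^sub>v y))"

text \<open>Critical point of F_n on PV_n (characterization recalled in the paper):
  mu nonzero and M_mu = c I + D with c real and D a derivation of mu.\<close>
definition critical_pt :: "nat \<Rightarrow> bilin \<Rightarrow> bool" where
  "critical_pt n \<mu> \<longleftrightarrow> normsq n \<mu> \<noteq> 0 \<and>
     (\<exists>c::real. \<exists>D. is_derivation n \<mu> D \<and> Mmu n \<mu> = complex_of_real c \<cdot>\<^sub>m 1\<^sub>m n + D)"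

definition eigen_data :: "complex mat \<Rightarrow> int list \<Rightarrow> nat list \<Rightarrow> bool" where
  "eigen_data A ks ds \<longleftrightarrow> length ks = length ds \<and> sorted_wrt (<) ks \<and> (\<forall>d\<in>set ds. d > 0) \<and>
     char_poly A = (\<Prod>i<length ks. [:- of_int (ks ! i), 1:] ^ (ds ! i))"

definition has_type :: "nat \<Rightarrow> bilin \<Rightarrow> int list \<Rightarrow> nat list \<Rightarrow> bool" where
  "has_type n \<mu> ks ds \<longleftrightarrow> normsq n \<mu> \<noteq> 0 \<and>
     (\<exists>c::real. \<exists>D. is_derivation n \<mu> D \<and> Mmu n \<mu> = complex_of_real c \<cdot>\<^sub>m 1\<^sub>m n + D \<and>
        (if D = 0\<^sub>m n n then ks = [0] \<and> ds = [n]
         else (\<exists>s::real. s > 0 \<and> eigen_data (complex_of_real s \<cdot>\<^sub>m D) ks ds \<and> Gcd (set ks) = 1)))"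

end

theory Submission
  imports Defs "Jordan_Normal_Form.Schur_Decomposition"
begin


lemma tr_mult: assumes "A \<in> carrier_mat n n" "B \<in> carrier_mat n n"
  shows "tr (A * B) = (\<Sum>a<n. \<Sum>b<n. A $$ (a,b) * B $$ (b,a))"
  using assms unfolding tr_def by (auto simp: scalar_prod_def intro!: sum.cong)

lemma tr_comm: assumes "A \<in> carrier_mat n n" "B \<in> carrier_mat n n"
  shows "tr (A * B) = tr (B * A)"
  unfolding tr_mult[OF assms] tr_mult[OF assms(2,1)]
  by (subst sum.swap) (simp add: mult.commute)

lemma Mmu_carrier: "Mmu n \<mu> \<in> carrier_mat n n"
  unfolding Mmu_def msum_def by auto

lemma Mmu_index: assumes "a < n" "b < n"
  shows "Mmu n \<mu> $$ (a,b) = 2 * (\<Sum>i<n. \<Sum>j<n. \<mu> i j a * cnj (\<mu> i j b))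
     - 2 * (\<Sum>i<n. \<Sum>j<n. cnj (\<mu> i a j) * \<mu> i b j)
     - 2 * (\<Sum>i<n. \<Sum>j<n. cnj (\<mu> a i j) * \<mu> b i j)"
  using assms unfolding Mmu_def msum_def Lmat_def Rmat_def adj_def
  by (simp add: scalar_prod_def sum.atLeast0_lessThan_Suc lessThan_atLeast0)




lemma mv_unit: fixes D :: "complex mat" assumes "D \<in> carrier_mat n n" "a < n" "i < n"
  shows "(D *\<^sub>v unit_vec n i) $ a = D $$ (a,i)"
proof -
  have "(D *\<^sub>v unit_vec n i) $ a = row D a \<bullet> unit_vec n i" using assms by simp
  also have "\<dots> = (\<Sum>k\<in>{0..<n}. if k = i then D $$ (a,k) else 0)"
    unfolding scalar_prod_def using assms by (intro sum.cong) auto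
  also have "\<dots> = D $$ (a,i)" using assms by simp
  finally show ?thesis .
qed

lemma bapp_idx: "k < n \<Longrightarrow> bapp n \<mu> x y $ k = (\<Sum>a<n. \<Sum>b<n. x $ a * y $ b * \<mu> a b k)"
  unfolding bapp_def by simp

lemma bapp_unit_r: assumes "j < n" "k < n"
  shows "bapp n \<mu> x (unit_vec n j) $ k = (\<Sum>a<n. x $ a * \<mu> a j k)"
proof -
  have "bapp n \<mu> x (unit_vec n j) $ k = (\<Sum>a<n. \<Sum>b<n. if b = j then x $ a * \<mu> a b k else 0)"
    using assms unfolding bapp_idx[OF assms(2)] by (intro sum.cong) auto
  thus ?thesis using assms by simp
qed

lemma bapp_unit_l: assumes "i < n" "k < n"
  shows "bapp n \<mu> (unit_vec n i) y $ k = (\<Sum>b<n. y $ b * \<mu> i b k)"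
proof -
  have "bapp n \<mu> (unit_vec n i) y $ k = (\<Sum>a<n. if a = i then (\<Sum>b<n. y $ b * \<mu> a b k) else 0)"
    using assms unfolding bapp_idx[OF assms(2)] by (intro sum.cong) auto
  thus ?thesis using assms by simp
qed

lemma deriv_index: assumes "is_derivation n \<mu> D" "i < n" "j < n" "k < n"
  shows "(\<Sum>l<n. D $$ (k,l) * \<mu> i j l) = (\<Sum>a<n. D $$ (a,i) * \<mu> a j k) + (\<Sum>b<n. D $$ (b,j) * \<mu> i b k)"
proof -
  have D: "D \<in> carrier_mat n n" using assms unfolding is_derivation_def by auto
  have "D *\<^sub>v bapp n \<mu> (unit_vec n i) (unit_vec n j) = bapp n \<mu> (D *\<^sub>v unit_vec n i) (unit_vec n j) + bapp n \<mu> (unit_vec n i) (D *\<^sub>v unit_vec n j)"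
    using assms unfolding is_derivation_def by auto
  hence "(D *\<^sub>v bapp n \<mu> (unit_vec n i) (unit_vec n j)) $ k = bapp n \<mu> (D *\<^sub>v unit_vec n i) (unit_vec n j) $ k + bapp n \<mu> (unit_vec n i) (D *\<^sub>v unit_vec n j) $ k"
    using assms D by (simp add: bapp_def)
  moreover have "bapp n \<mu> (D *\<^sub>v unit_vec n i) (unit_vec n j) $ k = (\<Sum>a<n. D $$ (a,i) * \<mu> a j k)"
    using assms D by (simp add: bapp_unit_r mv_unit)
  moreover have "bapp n \<mu> (unit_vec n i) (D *\<^sub>v unit_vec n j) $ k = (\<Sum>b<n. D $$ (b,j) * \<mu> i b k)"
    using assms D by (simp add: bapp_unit_l mv_unit)
  moreover have "(D *\<^sub>v bapp n \<mu> (unit_vec n i) (unit_vec n j)) $ k = (\<Sum>l<n. D $$ (k,l) * \<mu> i j l)"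
  proof -
    have "bapp n \<mu> (unit_vec n i) (unit_vec n j) = vec n (\<lambda>l. \<mu> i j l)"
    proof (rule eq_vecI)
      fix l assume l: "l < dim_vec (vec n (\<lambda>l. \<mu> i j l))"
      hence "bapp n \<mu> (unit_vec n i) (unit_vec n j) $ l = (\<Sum>b<n. unit_vec n j $ b * \<mu> i b l)"
        using assms by (intro bapp_unit_l) auto
      also have "\<dots> = (\<Sum>b<n. if b = j then \<mu> i b l else 0)"
        using assms by (intro sum.cong) auto
      finally have "bapp n \<mu> (unit_vec n i) (unit_vec n j) $ l = (\<Sum>b<n. if b = j then \<mu> i b l else 0)" .
      thus "bapp n \<mu> (unit_vec n i) (unit_vec n j) $ l = vec n (\<lambda>l. \<mu> i j l) $ l" using assms l by simp
    qed (simp add: bapp_def)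
    thus ?thesis using assms D by (simp add: scalar_prod_def lessThan_atLeast0)
  qed
  ultimately show ?thesis by simp
qed




lemma nest4: "(\<Sum>a<n. \<Sum>b<n. \<Sum>c<n. \<Sum>d<n. f a b c d) = (\<Sum>(a,b,c,d)\<in>{..<n}\<times>{..<n}\<times>{..<n}\<times>{..<(n::nat)}. (f a b c d :: complex))"
  by (simp add: sum.cartesian_product split_def)

lemma perm1: "(\<Sum>a<n. \<Sum>b<n. \<Sum>c<n. \<Sum>d<n. f a b c d) = (\<Sum>c<n. \<Sum>d<n. \<Sum>b<n. \<Sum>a<(n::nat). (f a b c d :: complex))"
  unfolding nest4 by (rule sum.reindex_bij_witness[where i="\<lambda>(c,d,b,a). (a,b,c,d)" and j="\<lambda>(a,b,c,d). (c,d,b,a)"]) auto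
lemma perm2: "(\<Sum>a<n. \<Sum>b<n. \<Sum>c<n. \<Sum>d<n. f a b c d) = (\<Sum>c<n. \<Sum>a<n. \<Sum>d<n. \<Sum>b<(n::nat). (f a b c d :: complex))"
  unfolding nest4 by (rule sum.reindex_bij_witness[where i="\<lambda>(c,a,d,b). (a,b,c,d)" and j="\<lambda>(a,b,c,d). (c,a,d,b)"]) auto
lemma perm3: "(\<Sum>a<n. \<Sum>b<n. \<Sum>c<n. \<Sum>d<n. f a b c d) = (\<Sum>a<n. \<Sum>c<n. \<Sum>d<n. \<Sum>b<(n::nat). (f a b c d :: complex))"
  unfolding nest4 by (rule sum.reindex_bij_witness[where i="\<lambda>(a,c,d,b). (a,b,c,d)" and j="\<lambda>(a,b,c,d). (a,c,d,b)"]) auto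

lemma E1: "(\<Sum>a<n. \<Sum>b<n. (\<Sum>i<n. \<Sum>j<n. \<mu> i j a * cnj (\<mu> i j b)) * D $$ (b,a))
   = (\<Sum>i<n. \<Sum>j<n. \<Sum>k<n. cnj (\<mu> i j k) * (\<Sum>l<n. D $$ (k,l) * \<mu> i j l))"
proof -
  have "(\<Sum>a<n. \<Sum>b<n. (\<Sum>i<n. \<Sum>j<n. \<mu> i j a * cnj (\<mu> i j b)) * D $$ (b,a))
     = (\<Sum>a<n. \<Sum>b<n. \<Sum>i<n. \<Sum>j<n. \<mu> i j a * cnj (\<mu> i j b) * D $$ (b,a))"
    by (simp add: sum_distrib_right)
  also have "\<dots> = (\<Sum>i<n. \<Sum>j<n. \<Sum>b<n. \<Sum>a<n. \<mu> i j a * cnj (\<mu> i j b) * D $$ (b,a))"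
    by (rule perm1)
  also have "\<dots> = (\<Sum>i<n. \<Sum>j<n. \<Sum>k<n. cnj (\<mu> i j k) * (\<Sum>l<n. D $$ (k,l) * \<mu> i j l))"
    by (simp add: sum_distrib_left mult_ac)
  finally show ?thesis .
qed

lemma E2: "(\<Sum>a<n. \<Sum>b<n. (\<Sum>i<n. \<Sum>j<n. cnj (\<mu> i a j) * \<mu> i b j) * D $$ (b,a))
   = (\<Sum>i<n. \<Sum>j<n. \<Sum>k<n. cnj (\<mu> i j k) * (\<Sum>b<n. D $$ (b,j) * \<mu> i b k))"
proof -
  have "(\<Sum>a<n. \<Sum>b<n. (\<Sum>i<n. \<Sum>j<n. cnj (\<mu> i a j) * \<mu> i b j) * D $$ (b,a))
     = (\<Sum>a<n. \<Sum>b<n. \<Sum>i<n. \<Sum>j<n. cnj (\<mu> i a j) * \<mu> i b j * D $$ (b,a))"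
    by (simp add: sum_distrib_right)
  also have "\<dots> = (\<Sum>i<n. \<Sum>a<n. \<Sum>j<n. \<Sum>b<n. cnj (\<mu> i a j) * \<mu> i b j * D $$ (b,a))"
    by (rule perm2)
  also have "\<dots> = (\<Sum>i<n. \<Sum>j<n. \<Sum>k<n. cnj (\<mu> i j k) * (\<Sum>b<n. D $$ (b,j) * \<mu> i b k))"
    by (simp add: sum_distrib_left mult_ac)
  finally show ?thesis .
qed

lemma E3: "(\<Sum>a<n. \<Sum>b<n. (\<Sum>i<n. \<Sum>j<n. cnj (\<mu> a i j) * \<mu> b i j) * D $$ (b,a))
   = (\<Sum>i<n. \<Sum>j<n. \<Sum>k<n. cnj (\<mu> i j k) * (\<Sum>a<n. D $$ (a,i) * \<mu> a j k))"
proof -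
  have "(\<Sum>a<n. \<Sum>b<n. (\<Sum>i<n. \<Sum>j<n. cnj (\<mu> a i j) * \<mu> b i j) * D $$ (b,a))
     = (\<Sum>a<n. \<Sum>b<n. \<Sum>i<n. \<Sum>j<n. cnj (\<mu> a i j) * \<mu> b i j * D $$ (b,a))"
    by (simp add: sum_distrib_right)
  also have "\<dots> = (\<Sum>a<n. \<Sum>i<n. \<Sum>j<n. \<Sum>b<n. cnj (\<mu> a i j) * \<mu> b i j * D $$ (b,a))"
    by (rule perm3)
  also have "\<dots> = (\<Sum>i<n. \<Sum>j<n. \<Sum>k<n. cnj (\<mu> i j k) * (\<Sum>a<n. D $$ (a,i) * \<mu> a j k))"
    by (simp add: sum_distrib_left mult_ac)
  finally show ?thesis .
qed

lemma trMD: assumes "is_derivation n \<mu> D"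
  shows "tr (Mmu n \<mu> * D) = 0"
proof -
  have D: "D \<in> carrier_mat n n" using assms unfolding is_derivation_def by auto
  let ?X = "\<lambda>a b. (\<Sum>i<n. \<Sum>j<n. \<mu> i j a * cnj (\<mu> i j b))"
  let ?Y = "\<lambda>a b. (\<Sum>i<n. \<Sum>j<n. cnj (\<mu> i a j) * \<mu> i b j)"
  let ?Z = "\<lambda>a b. (\<Sum>i<n. \<Sum>j<n. cnj (\<mu> a i j) * \<mu> b i j)"
  have "tr (Mmu n \<mu> * D) = (\<Sum>a<n. \<Sum>b<n. (2 * ?X a b - 2 * ?Y a b - 2 * ?Z a b) * D $$ (b,a))"
    unfolding tr_mult[OF Mmu_carrier D] by (intro sum.cong refl) (simp add: Mmu_index)
  also have "\<dots> = 2 * (\<Sum>a<n. \<Sum>b<n. ?X a b * D $$ (b,a)) - 2 * (\<Sum>a<n. \<Sum>b<n. ?Y a b * D $$ (b,a))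
     - 2 * (\<Sum>a<n. \<Sum>b<n. ?Z a b * D $$ (b,a))"
    by (simp add: algebra_simps sum_subtractf sum.distrib sum_distrib_left)
  also have "\<dots> = 2 * (\<Sum>i<n. \<Sum>j<n. \<Sum>k<n. cnj (\<mu> i j k) * ((\<Sum>l<n. D $$ (k,l) * \<mu> i j l)
      - (\<Sum>b<n. D $$ (b,j) * \<mu> i b k) - (\<Sum>a<n. D $$ (a,i) * \<mu> a j k)))"
    unfolding E1[where \<mu>=\<mu>] E2[where \<mu>=\<mu>] E3[where \<mu>=\<mu>] by (simp only: right_diff_distrib sum_subtractf)
  also have "\<dots> = 0"
    using deriv_index[OF assms] by (simp add: algebra_simps)
  finally show ?thesis .
qed

lemma nest3: "(\<Sum>a<n. \<Sum>b<n. \<Sum>c<n. f a b c) = (\<Sum>(a,b,c)\<in>{..<n}\<times>{..<n}\<times>{..<(n::nat)}. (f a b c :: complex))"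
  by (simp add: sum.cartesian_product split_def)

lemma p3a: "(\<Sum>a<n. \<Sum>b<n. \<Sum>c<n. f a b c) = (\<Sum>b<n. \<Sum>c<n. \<Sum>a<(n::nat). (f a b c :: complex))"
  unfolding nest3 by (rule sum.reindex_bij_witness[where i="\<lambda>(b,c,a). (a,b,c)" and j="\<lambda>(a,b,c). (b,c,a)"]) auto
lemma p3b: "(\<Sum>a<n. \<Sum>b<n. \<Sum>c<n. f a b c) = (\<Sum>b<n. \<Sum>a<n. \<Sum>c<(n::nat). (f a b c :: complex))"
  unfolding nest3 by (rule sum.reindex_bij_witness[where i="\<lambda>(b,a,c). (a,b,c)" and j="\<lambda>(a,b,c). (b,a,c)"]) auto

lemma normsq_c: "complex_of_real (normsq n \<mu>) = (\<Sum>i<n. \<Sum>j<n. \<Sum>k<n. \<mu> i j k * cnj (\<mu> i j k))"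
  unfolding normsq_def of_real_sum by (simp add: complex_norm_square del: of_real_power)

lemma trM: "tr (Mmu n \<mu>) = - 2 * complex_of_real (normsq n \<mu>)"
proof -
  have "tr (Mmu n \<mu>) = (\<Sum>a<n. Mmu n \<mu> $$ (a,a))"
    unfolding tr_def using Mmu_carrier[of n \<mu>] by simp
  also have "\<dots> = (\<Sum>a<n. 2 * (\<Sum>i<n. \<Sum>j<n. \<mu> i j a * cnj (\<mu> i j a))
     - 2 * (\<Sum>i<n. \<Sum>j<n. cnj (\<mu> i a j) * \<mu> i a j)
     - 2 * (\<Sum>i<n. \<Sum>j<n. cnj (\<mu> a i j) * \<mu> a i j))"
    by (intro sum.cong refl) (simp add: Mmu_index)
  also have "\<dots> = 2 * (\<Sum>a<n. \<Sum>i<n. \<Sum>j<n. \<mu> i j a * cnj (\<mu> i j a))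
     - 2 * (\<Sum>a<n. \<Sum>i<n. \<Sum>j<n. cnj (\<mu> i a j) * \<mu> i a j)
     - 2 * (\<Sum>a<n. \<Sum>i<n. \<Sum>j<n. cnj (\<mu> a i j) * \<mu> a i j)"
    by (simp only: sum_subtractf sum_distrib_left)
  also have "(\<Sum>a<n. \<Sum>i<n. \<Sum>j<n. \<mu> i j a * cnj (\<mu> i j a)) = complex_of_real (normsq n \<mu>)"
    unfolding normsq_c by (rule p3a)
  also have "(\<Sum>a<n. \<Sum>i<n. \<Sum>j<n. cnj (\<mu> i a j) * \<mu> i a j) = complex_of_real (normsq n \<mu>)"
    unfolding normsq_c by (subst p3b) (simp add: mult.commute)
  also have "(\<Sum>a<n. \<Sum>i<n. \<Sum>j<n. cnj (\<mu> a i j) * \<mu> a i j) = complex_of_real (normsq n \<mu>)"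
    unfolding normsq_c by (simp add: mult.commute)
  finally show ?thesis by simp
qed




lemma lin_list: fixes r :: nat shows "\<exists>es. (\<Prod>i<r. [:- f i, 1:] ^ (g i)) = (\<Prod>a\<leftarrow>es. [:- a, 1:]) \<and>
   sum_list es = (\<Sum>i<r. f i * of_nat (g i)) \<and>
   sum_list (map (\<lambda>a. a^2) es) = (\<Sum>i<r. (f i)^2 * of_nat (g i) :: complex)"
proof (induction r)
  case 0 show ?case by (intro exI[of _ "[]"]) simp
next
  case (Suc r)
  then obtain es where es: "(\<Prod>i<r. [:- f i, 1:] ^ (g i)) = (\<Prod>a\<leftarrow>es. [:- a, 1:])"
    "sum_list es = (\<Sum>i<r. f i * of_nat (g i))"
    "sum_list (map (\<lambda>a. a^2) es) = (\<Sum>i<r. (f i)^2 * of_nat (g i) :: complex)" by blast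
  show ?case
    by (intro exI[of _ "es @ replicate (g r) (f r)"] conjI)
      (simp_all only: es prod.lessThan_Suc sum.lessThan_Suc prod_list.append map_append map_replicate
        prod_list_replicate sum_list_append sum_list_replicate mult.commute)
qed



lemma tr_similar: assumes "similar_mat_wit A B P Q" "A \<in> carrier_mat n n"
  shows "tr A = tr B" "tr (A * A) = tr (B * B)"
proof -
  from assms have c: "B \<in> carrier_mat n n" "P \<in> carrier_mat n n" "Q \<in> carrier_mat n n"
    and PQ: "Q * P = 1\<^sub>m n" and A: "A = P * B * Q"
    unfolding similar_mat_wit_def Let_def by auto
  have QX: "Q * (P * X) = X" if "X \<in> carrier_mat n n" for X
  proof -
    have "Q * (P * X) = (Q * P) * X" using c(3) c(2) that by (rule assoc_mult_mat[symmetric])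
    thus ?thesis using PQ that by simp
  qed
  have "tr A = tr (Q * (P * B))" unfolding A using c by (intro tr_comm) auto
  also have "Q * (P * B) = B" using c by (intro QX)
  finally show "tr A = tr B" .
  have PB: "P * B \<in> carrier_mat n n" "B * Q \<in> carrier_mat n n" "B * B \<in> carrier_mat n n" using c by auto
  have AC: "A \<in> carrier_mat n n" by fact
  have A2: "A = P * (B * Q)" unfolding A using c(2) c(1) c(3) by (rule assoc_mult_mat)
  have QA: "Q * A = B * Q" unfolding A2 using PB(2) by (rule QX)
  have "A * A = P * B * Q * A" using A by simp
  also have "\<dots> = P * B * (Q * A)" using PB(1) c(3) AC by (rule assoc_mult_mat)
  also have "\<dots> = P * B * (B * Q)" unfolding QA ..
  also have "\<dots> = P * (B * (B * Q))" using c(2) c(1) PB(2) by (rule assoc_mult_mat)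
  also have "B * (B * Q) = B * B * Q" using c(1) c(1) c(3) by (rule assoc_mult_mat[symmetric])
  also have "P * (B * B * Q) = P * (B * B) * Q" using c(2) PB(3) c(3) by (rule assoc_mult_mat[symmetric])
  finally have "A * A = P * (B * B) * Q" .
  hence "tr (A * A) = tr (Q * (P * (B * B)))" using c by (simp only:) (intro tr_comm mult_carrier_mat c PB)
  also have "Q * (P * (B * B)) = B * B" using c by (intro QX) auto
  finally show "tr (A * A) = tr (B * B)" .
qed




lemma tr_upper: assumes B: "B \<in> carrier_mat n n" and ut: "upper_triangular B"
  shows "tr B = sum_list (diag_mat B)" "tr (B * B) = sum_list (map (\<lambda>a. a^2) (diag_mat B))"
proof -
  have dl: "sum_list (map f (diag_mat B)) = (\<Sum>i<n. f (B $$ (i,i)))" for f :: "complex \<Rightarrow> complex"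
    using B unfolding diag_mat_def by (simp add: sum_set_upt_conv_sum_list_nat[symmetric] lessThan_atLeast0 o_def)
  show "tr B = sum_list (diag_mat B)" using dl[of "\<lambda>x. x"] B unfolding tr_def by simp
  have "tr (B * B) = (\<Sum>a<n. \<Sum>b<n. B $$ (a,b) * B $$ (b,a))" by (rule tr_mult[OF B B])
  also have "\<dots> = (\<Sum>a<n. \<Sum>b<n. if b = a then (B $$ (a,a))^2 else 0)"
  proof (intro sum.cong refl)
    fix a b assume a: "a \<in> {..<n}" and b: "b \<in> {..<n}"
    show "B $$ (a,b) * B $$ (b,a) = (if b = a then (B $$ (a,a))^2 else 0)"
    proof (cases "b < a")
      case True thus ?thesis using ut a b B unfolding upper_triangular_def by auto
    next
      case False
      show ?thesis
      proof (cases "b = a")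
        case True thus ?thesis by (simp add: power2_eq_square)
      next
        case False2: False
        hence "a < b" using False by simp
        thus ?thesis using ut a b B False2 unfolding upper_triangular_def by auto
      qed
    qed
  qed
  also have "\<dots> = (\<Sum>a<n. (B $$ (a,a))^2)" by simp
  finally show "tr (B * B) = sum_list (map (\<lambda>a. a^2) (diag_mat B))" using dl[of "\<lambda>a. a^2"] by simp
qed

lemma eig: assumes A: "A \<in> carrier_mat n n"
  and cp: "char_poly A = (\<Prod>i<length ks. [:- of_int (ks ! i), 1:] ^ (ds ! i))"
  shows "tr A = (\<Sum>i<length ks. of_int (ks ! i) * of_nat (ds ! i))"
    "tr (A * A) = (\<Sum>i<length ks. (of_int (ks ! i))^2 * of_nat (ds ! i))"
proof -
  obtain es where es: "(\<Prod>i<length ks. [:- of_int (ks ! i), 1:] ^ (ds ! i)) = (\<Prod>a\<leftarrow>es. [:- a, 1:])"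
    "sum_list es = (\<Sum>i<length ks. of_int (ks ! i) * of_nat (ds ! i))"
    "sum_list (map (\<lambda>a. a^2) es) = (\<Sum>i<length ks. (of_int (ks ! i))^2 * of_nat (ds ! i) :: complex)"
    using lin_list[of "\<lambda>i. of_int (ks ! i)" "\<lambda>i. ds ! i" "length ks"] by blast
  obtain B P Q where S: "schur_decomposition A es = (B,P,Q)" by (cases "schur_decomposition A es") auto
  have cp2: "char_poly A = (\<Prod>a\<leftarrow>es. [:- a, 1:])" using cp es(1) by simp
  from schur_decomposition[OF A cp2 S] have sim: "similar_mat_wit A B P Q" and ut: "upper_triangular B"
    and dg: "diag_mat B = es" by auto
  have B: "B \<in> carrier_mat n n" using sim A unfolding similar_mat_wit_def Let_def by auto
  show "tr A = (\<Sum>i<length ks. of_int (ks ! i) * of_nat (ds ! i))"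
    using tr_similar(1)[OF sim A] tr_upper(1)[OF B ut] dg es(2) by simp
  show "tr (A * A) = (\<Sum>i<length ks. (of_int (ks ! i))^2 * of_nat (ds ! i))"
    using tr_similar(2)[OF sim A] tr_upper(2)[OF B ut] dg es(3) by simp
qed




lemma tr_add: "A \<in> carrier_mat n n \<Longrightarrow> B \<in> carrier_mat n n \<Longrightarrow> tr (A + B) = tr A + tr B"
  unfolding tr_def by (simp add: sum.distrib)
lemma tr_smult: "A \<in> carrier_mat n n \<Longrightarrow> tr (k \<cdot>\<^sub>m A) = k * tr A"
  unfolding tr_def by (simp add: sum_distrib_left)
lemma tr_one: "tr (1\<^sub>m n) = of_nat n"
  unfolding tr_def by simp

lemma traces:
  assumes D: "D \<in> carrier_mat n n" and M: "M = C \<cdot>\<^sub>m 1\<^sub>m n + D"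
  shows "tr M = C * of_nat n + tr D" "tr (M * D) = C * tr D + tr (D * D)"
    "tr (M * M) = C * tr M + tr (M * D)"
    "tr (s \<cdot>\<^sub>m D) = s * tr D" "tr ((s \<cdot>\<^sub>m D) * (s \<cdot>\<^sub>m D)) = s * s * tr (D * D)"
proof -
  have I: "C \<cdot>\<^sub>m 1\<^sub>m n \<in> carrier_mat n n" by simp
  have Mc: "M \<in> carrier_mat n n" using M D by simp
  show "tr M = C * of_nat n + tr D" unfolding M using D by (simp add: tr_add[OF I D] tr_smult[of "1\<^sub>m n" n] tr_one)
  have "M * D = C \<cdot>\<^sub>m D + D * D" unfolding M using D
    by (simp add: add_mult_distrib_mat[OF I D D] mult_smult_assoc_mat[of _ n n D n])
  thus "tr (M * D) = C * tr D + tr (D * D)" using D by (simp add: tr_add[of _ n] tr_smult[of _ n])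
  have "M * M = M * (C \<cdot>\<^sub>m 1\<^sub>m n) + M * D"
    by (subst (2) M, rule mult_add_distrib_mat[OF Mc I D])
  also have "M * (C \<cdot>\<^sub>m 1\<^sub>m n) = C \<cdot>\<^sub>m M"
    using mult_smult_distrib[OF Mc, of "1\<^sub>m n" n C] Mc by simp
  finally have "M * M = C \<cdot>\<^sub>m M + M * D" .
  thus "tr (M * M) = C * tr M + tr (M * D)" using D Mc by (simp add: tr_add[of _ n] tr_smult[of _ n])
  show "tr (s \<cdot>\<^sub>m D) = s * tr D" using D by (simp add: tr_smult)
  have "(s \<cdot>\<^sub>m D) * (s \<cdot>\<^sub>m D) = s \<cdot>\<^sub>m (s \<cdot>\<^sub>m (D * D))" using D
    by (simp add: mult_smult_assoc_mat[of _ n n _ n] mult_smult_distrib[of _ n n _ n])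
  thus "tr ((s \<cdot>\<^sub>m D) * (s \<cdot>\<^sub>m D)) = s * s * tr (D * D)" using D by (simp add: tr_smult[of _ n])
qed



lemma final_alg:
  fixes c N s t q K1 K2 n :: real
  assumes N: "N \<noteq> 0" and s: "s > 0" and K1: "K1 = s * t" and K2: "K2 = s * s * q"
    and K2nz: "K2 \<noteq> 0" and e1: "c * t + q = 0" and e2: "c * n + t = -2 * N"
  shows "(-2 * c * N) / N^2 = 4 / (n - K1^2 / K2)"
proof -
  have q: "q \<noteq> 0" using K2 K2nz by auto
  have qe: "q = - (c * t)" using e1 by linarith
  have c: "c \<noteq> 0" using qe q by auto
  have t: "t \<noteq> 0" using qe q by auto
  have "K1^2 / K2 = t^2 / q" using s unfolding K1 K2 by (simp add: power2_eq_square)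
  also have "\<dots> = - t / c" unfolding qe using c t by (simp add: power2_eq_square)
  finally have "n - K1^2 / K2 = (c * n + t) / c" using c by (simp add: field_simps)
  also have "\<dots> = -2 * N / c" using e2 by simp
  finally have X: "n - K1^2 / K2 = -2 * N / c" .
  have "4 / (-2 * N / c) = -2 * c / N" using c N by (simp add: field_simps)
  thus ?thesis unfolding X using N by (simp add: power2_eq_square)
qed

theorem proposition4p4:
  fixes n :: nat and \<mu> :: bilin and ks :: "int list" and ds :: "nat list"
  assumes "n \<ge> 1"
    and "critical_pt n \<mu>"
    and "has_type n \<mu> ks ds"
  shows "(ks = [0] \<and> ds = [n] \<longrightarrow> Fn n \<mu> = 4 / real n)
       \<and> (\<not> (ks = [0] \<and> ds = [n]) \<longrightarrow>
            Fn n \<mu> = 4 / (real n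
              - (\<Sum>i<length ks. of_int (ks ! i) * real (ds ! i))\<^sup>2
                / (\<Sum>i<length ks. (of_int (ks ! i))\<^sup>2 * real (ds ! i))))"
proof -
  from assms(3) obtain c D where N: "normsq n \<mu> \<noteq> 0" and der: "is_derivation n \<mu> D"
    and Meq: "Mmu n \<mu> = complex_of_real c \<cdot>\<^sub>m 1\<^sub>m n + D"
    and cond: "if D = 0\<^sub>m n n then ks = [0] \<and> ds = [n]
         else (\<exists>s::real. s > 0 \<and> eigen_data (complex_of_real s \<cdot>\<^sub>m D) ks ds \<and> Gcd (set ks) = 1)"
    unfolding has_type_def by blast
  define NN where "NN = normsq n \<mu>"
  have Dc: "D \<in> carrier_mat n n" using der unfolding is_derivation_def by auto
  note trs = traces[OF Dc Meq]
  have trM': "tr (Mmu n \<mu>) = - 2 * complex_of_real NN" unfolding NN_def by (rule trM)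
  have trMD': "tr (Mmu n \<mu> * D) = 0" by (rule trMD[OF der])
  have "tr (Mmu n \<mu> * Mmu n \<mu>) = complex_of_real (-2 * c * NN)"
    using trs(3) trM' trMD' by simp
  hence F: "Fn n \<mu> = (-2 * c * NN) / NN^2" unfolding Fn_def NN_def by simp
  have e2c: "complex_of_real c * of_nat n + tr D = - 2 * complex_of_real NN" using trs(1) trM' by simp
  show ?thesis
  proof (cases "D = 0\<^sub>m n n")
    case True
    then have ks: "ks = [0] \<and> ds = [n]" using cond by simp
    have "tr D = 0" using True unfolding tr_def by simp
    hence "complex_of_real (c * real n) = complex_of_real (-2 * NN)" using e2c by simp
    hence e: "c * real n = -2 * NN" using of_real_eq_iff by blast
    have n0: "real n > 0" using assms(1) by simp
    have c: "c = -2 * NN / real n" using e n0 by (simp add: field_simps)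
    have "Fn n \<mu> = 4 / real n" unfolding F c using n0 N unfolding NN_def by (simp add: field_simps power2_eq_square)
    thus ?thesis using ks by simp
  next
    case False
    from cond False obtain s where s: "s > 0" and ed: "eigen_data (complex_of_real s \<cdot>\<^sub>m D) ks ds"
      and g: "Gcd (set ks) = 1" by auto
    from ed have len: "length ks = length ds" and dpos: "\<forall>d\<in>set ds. d > 0"
      and cp: "char_poly (complex_of_real s \<cdot>\<^sub>m D) = (\<Prod>i<length ks. [:- of_int (ks ! i), 1:] ^ (ds ! i))"
      unfolding eigen_data_def by auto
    have sDc: "complex_of_real s \<cdot>\<^sub>m D \<in> carrier_mat n n" using Dc by simp
    note eg = eig[OF sDc cp]
    define K1 where "K1 = (\<Sum>i<length ks. of_int (ks ! i) * real (ds ! i))"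
    define K2 where "K2 = (\<Sum>i<length ks. (of_int (ks ! i))\<^sup>2 * real (ds ! i))"
    have K1c: "tr (complex_of_real s \<cdot>\<^sub>m D) = complex_of_real K1" using eg(1) unfolding K1_def by simp
    have K2c: "tr ((complex_of_real s \<cdot>\<^sub>m D) * (complex_of_real s \<cdot>\<^sub>m D)) = complex_of_real K2"
      using eg(2) unfolding K2_def by simp
    have K2nz: "K2 \<noteq> 0"
    proof
      assume "K2 = 0"
      hence "\<forall>i\<in>{..<length ks}. (of_int (ks ! i))\<^sup>2 * real (ds ! i) = 0"
        unfolding K2_def by (subst sum_nonneg_eq_0_iff[symmetric]) auto
      hence "\<forall>i<length ks. ks ! i = 0" using dpos len
        by (metis lessThan_iff mult_eq_0_iff nth_mem of_int_eq_0_iff of_nat_eq_0_iff zero_eq_power2 less_irrefl)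
      hence "set ks \<subseteq> {0}" by (auto simp: in_set_conv_nth)
      hence "set ks = {} \<or> set ks = {0}" by (metis subset_singletonD)
      thus False using g by auto
    qed
    have first: "\<not> (ks = [0] \<and> ds = [n])" using g by auto
    define t where "t = K1 / s"
    define q where "q = K2 / (s * s)"
    have trD: "tr D = complex_of_real t"
    proof -
      have "complex_of_real s * tr D = complex_of_real K1" using trs(4) K1c by simp
      thus ?thesis unfolding t_def using s by (simp add: field_simps)
    qed
    have trDD: "tr (D * D) = complex_of_real q"
    proof -
      have "complex_of_real s * complex_of_real s * tr (D * D) = complex_of_real K2" using trs(5) K2c by simp
      thus ?thesis unfolding q_def using s by (simp add: field_simps)
    qed
    have "complex_of_real (c * t + q) = 0" using trs(2) trMD' trD trDD by simp
    hence e1: "c * t + q = 0" by (simp only: of_real_eq_0_iff)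
    have "complex_of_real (c * real n + t) = complex_of_real (-2 * NN)" using e2c trD by simp
    hence e2: "c * real n + t = -2 * NN" using of_real_eq_iff by blast
    have "(-2 * c * NN) / NN^2 = 4 / (real n - K1^2 / K2)"
      by (rule final_alg[OF N[folded NN_def] s _ _ K2nz e1 e2]) (use s in \<open>simp_all add: t_def q_def\<close>)
    thus ?thesis using first F unfolding K1_def K2_def by simp
  qed
qed

end
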